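(* Let $\mathcal{B}$ be a real Banach space, $\mathcal{P}$ a cone over $\mathcal{B}$ with induced partial order $\preceq$, let $\mathcal{Q}$ be a real vector space and $d$ a quasi-cone metric on $\mathcal{Q}$ with values in $\mathcal{B}$. Let $H$ be a non-empty subset of $\mathcal{Q}$. Then $H$ is a forward pseudo Chebyshev subset of $\mathcal{Q}$ if and only if there do not exist $q\in\mathcal{Q}$, infinitely many linearly independent elements $\{h_n\}_{n\in\mathbb{N}}\subseteq H$, and a function $f:\mathcal{Q}\to\mathcal{B}$ such that for all $n\in\mathbb{N}$: $f(h_n)=d(q,h_n)$, $\{f(h)-f(h_n): h\in H\}\subseteq\mathcal{P}$, and $\{d(q,h)-f(h): h\in H\}\subseteq\mathcal{P}$.
   Context: A cone over a real Banach space $\mathcal{B}$ is a subset $\mathcal{P}\subseteq\mathcal{B}$ that is closed, $\mathcal{P}\neq\{0_\mathcal{B}\}$, satisfies $ax+by\in\mathcal{P}$ for all $x,y\in\mathcal{P}$ and $a,b\geq 0$, and such that $x\in\mathcal{P}$ and $-x\in\mathcal{P}$ imply $x=0_\mathcal{B}$. For $r,s\in\mathcal{B}$, $s\preceq r$ means $r-s\in\mathcal{P}$. A quasi-cone metric on a set $\mathcal{Q}$ is a map $d:\mathcal{Q}\times\mathcal{Q}\to\mathcal{B}$ such that for all $r,s,t\in\mathcal{Q}$: $d(r,s)\succeq 0_\mathcal{B}$; $d(r,s)=0_\mathcal{B}$ iff $r=s$; $d(r,t)\preceq d(r,s)+d(s,t)$. For non-empty $H\subseteq\mathcal{Q}$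 and $q\in\mathcal{Q}$, $\mathcal{P}_{H_f}(q)$ is the set of all $h_f\in H$ with $d(q,h_f)\preceq d(q,h)$ for all $h\in H$. A non-empty $H\subseteq\mathcal{Q}$ is a forward pseudo Chebyshev subset of $\mathcal{Q}$ if for every $q\in\mathcal{Q}$ the set $\mathcal{P}_{H_f}(q)$ does not contain infinitely many linearly independent elements. *)

theory Defs
  imports "HOL-Analysis.Analysis"
begin

definition is_cone :: "'b::banach set \<Rightarrow> bool" where
  "is_cone P \<longleftrightarrow> closed P \<and> P \<noteq> {0} \<and>
     (\<forall>x\<in>P. \<forall>y\<in>P. \<forall>a b :: real. a \<ge> 0 \<longrightarrow> b \<ge> 0 \<longrightarrow> a *\<^sub>R x + b *\<^sub>R y \<in> P) \<and>
     (\<forall>x. x \<in> P \<and> - x \<in> P \<longrightarrow> x = 0)"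

definition cone_le :: "'b::banach set \<Rightarrow> 'b \<Rightarrow> 'b \<Rightarrow> bool" where
  "cone_le P s r \<longleftrightarrow> r - s \<in> P"

definition quasi_cone_metric :: "'b::banach set \<Rightarrow> ('a \<Rightarrow> 'a \<Rightarrow> 'b) \<Rightarrow> bool" where
  "quasi_cone_metric P d \<longleftrightarrow>
     (\<forall>r s. cone_le P 0 (d r s)) \<and>
     (\<forall>r s. d r s = 0 \<longleftrightarrow> r = s) \<and>
     (\<forall>r s t. cone_le P (d r t) (d r s + d s t))"

definition forward_proj :: "'b::banach set \<Rightarrow> ('a \<Rightarrow> 'a \<Rightarrow> 'b) \<Rightarrow> 'a set \<Rightarrow> 'a \<Rightarrow> 'a set" where
  "forward_proj P d H q = {hf \<in> H. \<forall>h\<in>H. cone_le P (d q hf) (d q h)}"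

definition forward_pseudo_chebyshev ::
  "'b::banach set \<Rightarrow> ('a::real_vector \<Rightarrow> 'a \<Rightarrow> 'b) \<Rightarrow> 'a set \<Rightarrow> bool" where
  "forward_pseudo_chebyshev P d H \<longleftrightarrow> H \<noteq> {} \<and>
     (\<forall>q. \<not> (\<exists>S. S \<subseteq> forward_proj P d H q \<and> infinite S \<and> independent S))"

end

theory Submission
  imports Defs
begin

theorem theorem7:
  fixes P :: "'b::banach set" and d :: "'a::real_vector \<Rightarrow> 'a \<Rightarrow> 'b" and H :: "'a set"
  assumes "is_cone P"
    and "quasi_cone_metric P d"
    and "H \<noteq> {}"
  shows "forward_pseudo_chebyshev P d H \<longleftrightarrow>
    \<not> (\<exists>q (h :: nat \<Rightarrow> 'a) (f :: 'a \<Rightarrow> 'b).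
          inj h \<and> range h \<subseteq> H \<and> independent (range h) \<and>
          (\<forall>n. f (h n) = d q (h n) \<and>
               (\<forall>x\<in>H. f x - f (h n) \<in> P) \<and>
               (\<forall>x\<in>H. d q x - f x \<in> P)))"
proof -
  have add: "x + y \<in> P" if "x \<in> P" "y \<in> P" for x y
    using assms(1) that unfolding is_cone_def by (metis scaleR_one order_refl zero_le_one)
  have dP: "d r s \<in> P" for r s using assms(2) unfolding quasi_cone_metric_def cone_le_def by simp
  have zero: "0 \<in> P"
    using assms(1) dP unfolding is_cone_def by (metis scaleR_zero_left add_0 order_refl)
  show ?thesis
  proof
    assume ch: "forward_pseudo_chebyshev P d H"
    show "\<not> (\<exists>q (h :: nat \<Rightarrow> 'a) (f :: 'a \<Rightarrow> 'b).
          inj h \<and> range h \<subseteq> H \<and> independent (range h) \<and>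
          (\<forall>n. f (h n) = d q (h n) \<and>
               (\<forall>x\<in>H. f x - f (h n) \<in> P) \<and>
               (\<forall>x\<in>H. d q x - f x \<in> P)))"
    proof
      assume "\<exists>q (h :: nat \<Rightarrow> 'a) (f :: 'a \<Rightarrow> 'b).
          inj h \<and> range h \<subseteq> H \<and> independent (range h) \<and>
          (\<forall>n. f (h n) = d q (h n) \<and>
               (\<forall>x\<in>H. f x - f (h n) \<in> P) \<and>
               (\<forall>x\<in>H. d q x - f x \<in> P))"
      then obtain q and h :: "nat \<Rightarrow> 'a" and f where h: "inj h" "range h \<subseteq> H" "independent (range h)"
        and f: "\<And>n. f (h n) = d q (h n)" "\<And>n x. x \<in> H \<Longrightarrow> f x - f (h n) \<in> P"
          "\<And>x. x \<in> H \<Longrightarrow> d q x - f x \<in> P" by blast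
      have "range h \<subseteq> forward_proj P d H q"
      proof
        fix y assume "y \<in> range h"
        then obtain n where y: "y = h n" by auto
        have "\<forall>x\<in>H. cone_le P (d q y) (d q x)"
        proof
          fix x assume "x \<in> H"
          have "(d q x - f x) + (f x - f (h n)) \<in> P" using add f \<open>x \<in> H\<close> by blast
          thus "cone_le P (d q y) (d q x)" unfolding cone_le_def y f(1)[symmetric] by simp
        qed
        thus "y \<in> forward_proj P d H q" unfolding forward_proj_def using h(2) y by auto
      qed
      moreover have "infinite (range h)" using h(1) by (simp add: range_inj_infinite)
      ultimately show False using ch h(3) unfolding forward_pseudo_chebyshev_def by blast
    qed
  next
    assume nex: "\<not> (\<exists>q (h :: nat \<Rightarrow> 'a) (f :: 'a \<Rightarrow> 'b).
          inj h \<and> range h \<subseteq> H \<and> independent (range h) \<and>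
          (\<forall>n. f (h n) = d q (h n) \<and>
               (\<forall>x\<in>H. f x - f (h n) \<in> P) \<and>
               (\<forall>x\<in>H. d q x - f x \<in> P)))"
    show "forward_pseudo_chebyshev P d H"
      unfolding forward_pseudo_chebyshev_def
    proof (intro conjI allI notI)
      assume "H = {}" thus False using assms(3) by blast
    next
      fix q assume "\<exists>S. S \<subseteq> forward_proj P d H q \<and> infinite S \<and> independent S"
      then obtain S where S: "S \<subseteq> forward_proj P d H q" "infinite S" "independent S" by blast
      obtain h :: "nat \<Rightarrow> 'a" where h: "inj h" "range h \<subseteq> S"
        using infinite_countable_subset[OF S(2)] by blast
      have "independent (range h)" using S(3) h(2) dependent_mono by blast
      moreover have "range h \<subseteq> H" using h(2) S(1) unfolding forward_proj_def by auto
      moreover have "\<forall>x\<in>H. d q x - d q (h n) \<in> P" for n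
        using h(2) S(1) unfolding forward_proj_def cone_le_def by blast
      ultimately show False using nex h(1) zero
        by (metis (no_types, lifting) diff_self)
    qed
  qed
qed

end
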